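(* Let $\lambda_2,\lambda_3$ be distinct nonzero complex numbers, $J_1^*=\mathrm{diag}(0,\lambda_2,\lambda_3)$, and $h>0$. Set $$\psi=1,\qquad \phi=\frac{(\lambda_2-\lambda_3)(e^{\lambda_2h}-1)(e^{\lambda_3h}-1)}{\lambda_2\lambda_3(e^{\lambda_2h}-e^{\lambda_3h})},\qquad \theta=\frac{\lambda_3(e^{\lambda_2h}-1)-\lambda_2(e^{\lambda_3h}-1)}{(\lambda_2-\lambda_3)(e^{\lambda_2h}-1)(e^{\lambda_3h}-1)}.$$ Then (whenever these expressions are defined and the scheme is uniquely solvable for $\mathbf{x}_{k+1}$) the difference scheme $$\frac{\mathbf{x}_{k+1}-\psi\mathbf{x}_k}{\phi}=J_1^*\big[\theta\mathbf{x}_{k+1}+(1-\theta)\mathbf{x}_k\big]$$ is exact for the system $\mathbf{x}'=J_1^*\mathbf{x}$.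
   Context: A one-step difference scheme with step size $h>0$ for $\mathbf{x}'=M\mathbf{x}$ is called exact if for every initial vector $\mathbf{x}_0$ the sequence $(\mathbf{x}_k)$ it generates satisfies $\mathbf{x}_k=\mathbf{x}(kh)$ for all $k\ge 0$, where $\mathbf{x}(t)$ solves $\mathbf{x}'=M\mathbf{x}$, $\mathbf{x}(0)=\mathbf{x}_0$. *)

theory Defs
  imports "HOL-Analysis.Analysis"
begin

definition lin_ode_solution ::
  "complex^'n^'n \<Rightarrow> complex^'n \<Rightarrow> (real \<Rightarrow> complex^'n) \<Rightarrow> bool" where
  "lin_ode_solution M x0 x \<longleftrightarrow>
     x 0 = x0 \<and> (\<forall>t. (x has_vector_derivative (M *v x t)) (at t))"

definition exact_scheme ::
  "(complex^'n \<Rightarrow> complex^'n \<Rightarrow> bool) \<Rightarrow> real \<Rightarrow> complex^'n^'n \<Rightarrow> bool" where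
  "exact_scheme S h M \<longleftrightarrow>
     (\<forall>x0 xs x. xs 0 = x0 \<and> (\<forall>k. S (xs k) (xs (Suc k))) \<and> lin_ode_solution M x0 x
        \<longrightarrow> (\<forall>k. xs k = x (real k * h)))"

definition diag3 :: "complex \<Rightarrow> complex \<Rightarrow> complex \<Rightarrow> complex^3^3" where
  "diag3 a b c = (\<chi> i j. if i = j then (vector [a, b, c] :: complex^3) $ i else 0)"

end

theory Submission
  imports Defs
begin

lemma diag3_mult: "(diag3 a b c *v v) $ i = (vector [a,b,c] :: complex^3) $ i * v $ i"
proof -
  have e: "\<And>P x (y::complex). (if P then x else 0) * y = (if P then x * y else 0)" by simp
  show ?thesis by (simp add: diag3_def matrix_vector_mult_def e)
qed

lemma sol_form:
  assumes "lin_ode_solution (diag3 a b c) x0 x"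
  shows "x t $ i = exp (t *\<^sub>R ((vector [a,b,c] :: complex^3) $ i)) * x0 $ i"
proof -
  define d where "d = (vector [a,b,c] :: complex^3) $ i"
  have D: "\<And>t. ((\<lambda>t. x t $ i) has_vector_derivative d * x t $ i) (at t)"
  proof -
    fix t
    have "(x has_vector_derivative (diag3 a b c *v x t)) (at t)"
      using assms unfolding lin_ode_solution_def by blast
    from bounded_linear.has_vector_derivative[OF bounded_linear_vec_nth this]
    show "((\<lambda>t. x t $ i) has_vector_derivative d * x t $ i) (at t)"
      by (simp add: diag3_mult d_def)
  qed
  have "((\<lambda>t. exp (t *\<^sub>R (-d)) * x t $ i) has_vector_derivative 0) (at t within UNIV)" for t
  proof -
    have "((\<lambda>t. exp (t *\<^sub>R (-d)) * x t $ i) has_vector_derivative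
       exp (t *\<^sub>R (-d)) * (d * x t $ i) + ((-d) * exp (t *\<^sub>R (-d))) * x t $ i) (at t)"
      by (rule has_vector_derivative_mult[OF exp_scaleR_has_vector_derivative_left D])
    then show ?thesis by (simp add: algebra_simps)
  qed
  then obtain c where c: "\<And>t. exp (t *\<^sub>R (-d)) * x t $ i = c"
    using has_vector_derivative_zero_constant[of UNIV "\<lambda>t. exp (t *\<^sub>R (-d)) * x t $ i"] by auto
  have "c = x0 $ i" using c[of 0] assms by (simp add: lin_ode_solution_def)
  then have "exp (t *\<^sub>R (-d)) * x t $ i = x0 $ i" using c by simp
  then have "exp (t *\<^sub>R d) * (exp (t *\<^sub>R (-d)) * x t $ i) = exp (t *\<^sub>R d) * x0 $ i" by simp
  then show ?thesis unfolding d_def[symmetric]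
    by (simp add: mult.assoc[symmetric] exp_add[symmetric] scaleR_right_diff_distrib[symmetric])
qed
lemma scal:
  fixes l2 l3 :: complex and h :: real
  assumes "l2 \<noteq> 0" "l3 \<noteq> 0" "l2 \<noteq> l3"
    and "exp (l2 * h) - exp (l3 * h) \<noteq> 0" "exp (l2 * h) - 1 \<noteq> 0" "exp (l3 * h) - 1 \<noteq> 0"
  shows "(exp (l2 * h) - 1) / (((l2 - l3) * (exp (l2 * h) - 1) * (exp (l3 * h) - 1)) /
                  (l2 * l3 * (exp (l2 * h) - exp (l3 * h))))
     = l2 * ((l3 * (exp (l2 * h) - 1) - l2 * (exp (l3 * h) - 1)) /
                  ((l2 - l3) * (exp (l2 * h) - 1) * (exp (l3 * h) - 1)) * (exp (l2 * h) - 1) + 1)"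
proof -
  define a where "a = exp (l2 * h)"
  define b where "b = exp (l3 * h)"
  have n: "l2 - l3 \<noteq> 0" "a - b \<noteq> 0" "a - 1 \<noteq> 0" "b - 1 \<noteq> 0" using assms by (auto simp: a_def b_def)
  have "(a - 1) / (((l2 - l3) * (a - 1) * (b - 1)) / (l2 * l3 * (a - b)))
     = l2 * ((l3 * (a - 1) - l2 * (b - 1)) / ((l2 - l3) * (a - 1) * (b - 1)) * (a - 1) + 1)"
  proof -
    define D where "D = (l2 - l3) * (a - 1) * (b - 1)"
    define N where "N = l3 * (a - 1) - l2 * (b - 1)"
    have D: "D \<noteq> 0" using n unfolding D_def by simp
    have e1: "(a - 1) * (l2 * l3 * (a - b)) = l2 * (N * (a - 1) + D)"
      unfolding N_def D_def by algebra
    have e2: "(N * (a - 1) + D) / D = N / D * (a - 1) + 1" using D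
      by (simp add: add_divide_distrib)
    have "(a - 1) / (D / (l2 * l3 * (a - b))) = ((a - 1) * (l2 * l3 * (a - b))) / D" by simp
    also have "\<dots> = l2 * ((N * (a - 1) + D) / D)" unfolding e1 by simp
    also have "\<dots> = l2 * (N / D * (a - 1) + 1)" unfolding e2 ..
    finally show ?thesis unfolding N_def D_def .
  qed
  then show ?thesis unfolding a_def b_def .
qed

theorem theorem5:
  fixes l2 l3 :: complex and h :: real and psi phi theta :: complex
  assumes "l2 \<noteq> 0" and "l3 \<noteq> 0" and "l2 \<noteq> l3" and "h > 0"
  defines "psi \<equiv> 1"
  defines "phi \<equiv> ((l2 - l3) * (exp (l2 * h) - 1) * (exp (l3 * h) - 1)) /
                  (l2 * l3 * (exp (l2 * h) - exp (l3 * h)))"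
  defines "theta \<equiv> (l3 * (exp (l2 * h) - 1) - l2 * (exp (l3 * h) - 1)) /
                  ((l2 - l3) * (exp (l2 * h) - 1) * (exp (l3 * h) - 1))"
  assumes "l2 * l3 * (exp (l2 * h) - exp (l3 * h)) \<noteq> 0"
      and "(l2 - l3) * (exp (l2 * h) - 1) * (exp (l3 * h) - 1) \<noteq> 0"
      and "phi \<noteq> 0"
  assumes "\<forall>xk. \<exists>!xk1. (1 / phi) *s (xk1 - psi *s xk) =
                        diag3 0 l2 l3 *v (theta *s xk1 + (1 - theta) *s xk)"
  shows "exact_scheme
           (\<lambda>xk xk1. (1 / phi) *s (xk1 - psi *s xk) =
                        diag3 0 l2 l3 *v (theta *s xk1 + (1 - theta) *s xk))
           h (diag3 0 l2 l3)"
proof -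
  define S where "S = (\<lambda>xk xk1. (1 / phi) *s (xk1 - psi *s xk) =
                        diag3 0 l2 l3 *v (theta *s xk1 + (1 - theta) *s xk))"
  have nz: "exp (l2 * h) - exp (l3 * h) \<noteq> 0" "exp (l2 * h) - 1 \<noteq> 0" "exp (l3 * h) - 1 \<noteq> 0"
    using \<open>l2 * l3 * (exp (l2 * h) - exp (l3 * h)) \<noteq> 0\<close> \<open>(l2 - l3) * (exp (l2 * h) - 1) * (exp (l3 * h) - 1) \<noteq> 0\<close> by auto
  have s2: "(exp (l2 * h) - 1) / phi = l2 * (theta * (exp (l2 * h) - 1) + 1)"
    unfolding phi_def theta_def by (rule scal[OF assms(1-3) nz])
  have s3: "(exp (l3 * h) - 1) / phi = l3 * (theta * (exp (l3 * h) - 1) + 1)"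
  proof -
    have "(exp (l3 * h) - 1) / phi = (exp (l3 * h) - 1) / (((l3 - l2) * (exp (l3 * h) - 1) * (exp (l2 * h) - 1)) /
                  (l3 * l2 * (exp (l3 * h) - exp (l2 * h))))"
    proof -
      have u: "(l3 - l2) * (exp (l3 * h) - 1) * (exp (l2 * h) - 1) = - ((l2 - l3) * (exp (l2 * h) - 1) * (exp (l3 * h) - 1))" by algebra
      have v: "l3 * l2 * (exp (l3 * h) - exp (l2 * h)) = - (l2 * l3 * (exp (l2 * h) - exp (l3 * h)))" by algebra
      show ?thesis unfolding phi_def u v minus_divide_divide ..
    qed
    also have "\<dots> = l3 * ((l2 * (exp (l3 * h) - 1) - l3 * (exp (l2 * h) - 1)) /
                  ((l3 - l2) * (exp (l3 * h) - 1) * (exp (l2 * h) - 1)) * (exp (l3 * h) - 1) + 1)"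
      by (rule scal) (use assms(1-3) nz in auto)
    also have "\<dots> = l3 * (theta * (exp (l3 * h) - 1) + 1)"
    proof -
      have u: "(l3 - l2) * (exp (l3 * h) - 1) * (exp (l2 * h) - 1) = - ((l2 - l3) * (exp (l2 * h) - 1) * (exp (l3 * h) - 1))" by algebra
      have v: "l2 * (exp (l3 * h) - 1) - l3 * (exp (l2 * h) - 1) = - (l3 * (exp (l2 * h) - 1) - l2 * (exp (l3 * h) - 1))" by algebra
      show ?thesis unfolding theta_def u v minus_divide_divide ..
    qed
    finally show ?thesis .
  qed
  have step: "S v w" if w: "\<And>i. w $ i = exp (h *\<^sub>R (vector [0,l2,l3] :: complex^3) $ i) * v $ i" for v w
  proof -
    have "((1 / phi) *s (w - psi *s v)) $ i = (diag3 0 l2 l3 *v (theta *s w + (1 - theta) *s v)) $ i" for i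
    proof -
      consider "i = 1" | "i = 2" | "i = 3" using exhaust_3 by blast
      then show ?thesis
      proof cases
        case 1 then show ?thesis using w[of i] by (simp add: diag3_mult psi_def)
      next
        case 2
        have "(1 / phi) * (exp (l2 * h) * v$i - v$i) = l2 * (theta * (exp (l2 * h) * v$i) + (1 - theta) * v$i)"
        proof -
          have "(1 / phi) * (exp (l2 * h) * v$i - v$i) = (exp (l2 * h) - 1) / phi * v$i"
            by (simp add: diff_divide_distrib[symmetric] algebra_simps)
          also have "\<dots> = l2 * (theta * (exp (l2 * h) - 1) + 1) * v$i" unfolding s2 ..
          also have "\<dots> = l2 * (theta * (exp (l2 * h) * v$i) + (1 - theta) * v$i)"
            by (simp add: algebra_simps)
          finally show ?thesis .
        qed
        then show ?thesis using 2 w[of i] by (simp add: diag3_mult psi_def scaleR_conv_of_real mult.commute diff_divide_distrib[symmetric] left_diff_distrib)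
      next
        case 3
        have "(1 / phi) * (exp (l3 * h) * v$i - v$i) = l3 * (theta * (exp (l3 * h) * v$i) + (1 - theta) * v$i)"
        proof -
          have "(1 / phi) * (exp (l3 * h) * v$i - v$i) = (exp (l3 * h) - 1) / phi * v$i"
            by (simp add: diff_divide_distrib[symmetric] algebra_simps)
          also have "\<dots> = l3 * (theta * (exp (l3 * h) - 1) + 1) * v$i" unfolding s3 ..
          also have "\<dots> = l3 * (theta * (exp (l3 * h) * v$i) + (1 - theta) * v$i)"
            by (simp add: algebra_simps)
          finally show ?thesis .
        qed
        then show ?thesis using 3 w[of i] by (simp add: diag3_mult psi_def scaleR_conv_of_real mult.commute diff_divide_distrib[symmetric] left_diff_distrib)
      qed
    qed
    then show ?thesis unfolding S_def by (simp add: vec_eq_iff)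
  qed
  have uniq: "\<forall>xk. \<exists>!xk1. S xk xk1" using \<open>\<forall>xk. \<exists>!xk1. (1 / phi) *s (xk1 - psi *s xk) = diag3 0 l2 l3 *v (theta *s xk1 + (1 - theta) *s xk)\<close> unfolding S_def by blast
  have U: "\<And>a b c. S a b \<Longrightarrow> S a c \<Longrightarrow> b = c" using uniq by blast
  have "xs k = x (real k * h)" if "xs 0 = x0" "\<forall>k. S (xs k) (xs (Suc k))" "lin_ode_solution (diag3 0 l2 l3) x0 x" for x0 xs x k
  proof (induction k)
    case 0
    have "x 0 = x0" using that(3) unfolding lin_ode_solution_def by blast
    then show ?case using that(1) by simp
  next
    case (Suc k)
    have "S (x (real k * h)) (x (real (Suc k) * h))"
    proof (rule step)
      fix i
      show "x (real (Suc k) * h) $ i = exp (h *\<^sub>R vector [0, l2, l3] $ i) * x (real k * h) $ i"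
      proof -
        define d where "d = (vector [0, l2, l3] :: complex^3) $ i"
        have a: "(real (Suc k) * h) *\<^sub>R d = h *\<^sub>R d + (real k * h) *\<^sub>R d"
          by (simp add: algebra_simps)
        have "x (real (Suc k) * h) $ i = exp ((real (Suc k) * h) *\<^sub>R d) * x0 $ i"
          using sol_form[OF that(3)] unfolding d_def by blast
        also have "\<dots> = exp (h *\<^sub>R d) * (exp ((real k * h) *\<^sub>R d) * x0 $ i)"
          unfolding a exp_add by simp
        also have "exp ((real k * h) *\<^sub>R d) * x0 $ i = x (real k * h) $ i"
          using sol_form[OF that(3), of "real k * h" i] unfolding d_def by simp
        finally show ?thesis unfolding d_def .
      qed
    qed
    moreover have "S (x (real k * h)) (xs (Suc k))" using that(2) Suc by metis
    ultimately show ?case using U by blast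
  qed
  then show ?thesis unfolding exact_scheme_def S_def[symmetric] by blast
qed
end
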